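(* Consider unbounded homogeneous systems with error specifications, and for $k\in\mathbb{N}_{>0}$ the Horn constraints (H0)–(H4) described in the context. (1) If, for a given system and error specification, the constraints (H0)–(H4) are solvable for some $k$, then they are also solvable for every $k'>k$ (for the same system and error specification). (2) If $k'>k>0$, then there exist a system and error specification for which the constraints (H0)–(H4) are solvable for $k'$ but not solvable for $k$.
   Context: An unbounded homogeneous system consists of a non-empty global state space $G$, the process index set $P=\mathbb{N}$, a non-empty local state space $L$ (the same for all processes), a set of initial states $\mathit{Init}\subseteq G\times L$ (the same for all processes), and, for each process id $p\in\mathbb{N}$, a transition relation $(g,l)\stackrel{p}{\to}(g',l')$ on $G\times L$ (the behaviour may depend on the id $p$). System states are pairs $(g,\bar l)$ with $\bar l\in L^{\mathbb{N}}$; initial states are those with $(g,\bar l[p])\in\mathit{Init}$ for all $p$; the system transitions are $(g,\bar l)\to(g',\bar l[p/l'])$ whenever $(g,\bar l[p])\stackrel{p}{\to}(g',l')$, where $\bar l[p/l']$ replaces component $p$ by $l'$. An error specification is $(\langle p_1,E_1\rangle,\dots,\langle p_m,E_m\rangle)$ with pairwise distinct $p_j\in\mathbb{N}$ and $E_j\subseteq G\times L$; error states are $(g,\bar l)$ with $(g,\bar l[p_j])\in E_j$ for all $j$. For $k\ge 1$, the constraints are on a single relation $R\subseteq G\times(\mathbb{N}\times L)^k$; $\mathit{dist}(x_1,\dots,x_r)$ means the $x_i$ are pairwise distinct; for indices $a\le b$, $\mathit{RConj}(a,\dots,b)$ denotes $\bigwedge_{i_1<\dots<i_k,\ i_j\in\{a,\dots,b\}}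 R(g,q_{i_1},l_{i_1},\dots,q_{i_k},l_{i_k})$. All variables $g,g',q_i\in\mathbb{N},l_i,l_i'\in L$ are universally quantified: (H0) for every permutation $\sigma$ of $\{1,\dots,k\}$: $\mathit{dist}(q_1,\dots,q_k)\wedge R(g,q_1,l_1,\dots,q_k,l_k)\Rightarrow R(g,q_{\sigma(1)},l_{\sigma(1)},\dots,q_{\sigma(k)},l_{\sigma(k)})$; (H1) $\mathit{dist}(q_1,\dots,q_k)\wedge\mathit{Init}(g,l_1)\wedge\dots\wedge\mathit{Init}(g,l_k)\Rightarrow R(g,q_1,l_1,\dots,q_k,l_k)$; (H2) $\mathit{dist}(q_1,\dots,q_k)\wedge (g,l_1)\stackrel{q_1}{\to}(g',l_1')\wedge R(g,q_1,l_1,\dots,q_k,l_k)\Rightarrow R(g',q_1,l_1',q_2,l_2,\dots,q_k,l_k)$; (H3) $\mathit{dist}(q_0,q_1,\dots,q_k)\wedge (g,l_0)\stackrel{q_0}{\to}(g',l_0')\wedge\mathit{RConj}(0,\dots,k)\Rightarrow R(g',q_1,l_1,\dots,q_k,l_k)$; (H4) with $r=\max\{m,k\}$: $\mathit{dist}(q_1,\dots,q_r)\wedge\bigwedge_{j=1}^m\big(q_j=p_j\wedge(g,l_j)\in E_j\big)\wedge\mathit{RConj}(1,\dots,r)\Rightarrow\mathit{false}$. The constraints are solvable for $k$ if some relation $R$ makes all of (H0)–(H4) true. *)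

theory Defs
  imports "HOL-Combinatorics.Permutations"
begin

(* A candidate relation R is a predicate on G \<times> (nat \<times> L) list, only its
   values on lists of length k matter. Tuples (q_1,l_1,...,q_k,l_k) are given
   by functions q, l indexed from a to b. *)

definition tup :: "(nat \<Rightarrow> nat) \<Rightarrow> (nat \<Rightarrow> 'l) \<Rightarrow> nat \<Rightarrow> nat \<Rightarrow> (nat \<times> 'l) list" where
  "tup q l a b = map (\<lambda>i. (q i, l i)) [a..<Suc b]"

definition RConj :: "nat \<Rightarrow> ('g \<Rightarrow> (nat \<times> 'l) list \<Rightarrow> bool) \<Rightarrow> 'g \<Rightarrow>
    (nat \<Rightarrow> nat) \<Rightarrow> (nat \<Rightarrow> 'l) \<Rightarrow> nat \<Rightarrow> nat \<Rightarrow> bool" where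
  "RConj k R g q l a b \<longleftrightarrow>
     (\<forall>idx :: nat \<Rightarrow> nat.
        (\<forall>i j. 1 \<le> i \<longrightarrow> i < j \<longrightarrow> j \<le> k \<longrightarrow> idx i < idx j) \<and>
        (\<forall>i\<in>{1..k}. idx i \<in> {a..b})
        \<longrightarrow> R g (map (\<lambda>j. (q (idx j), l (idx j))) [1..<Suc k]))"

definition error_spec :: "(nat \<times> ('g \<times> 'l) set) list \<Rightarrow> bool" where
  "error_spec errs \<longleftrightarrow> distinct (map fst errs)"

definition H0 :: "nat \<Rightarrow> ('g \<Rightarrow> (nat \<times> 'l) list \<Rightarrow> bool) \<Rightarrow> bool" where
  "H0 k R \<longleftrightarrow> (\<forall>\<sigma> g q l. \<sigma> permutes {1..k} \<longrightarrow> inj_on q {1..k} \<longrightarrow> R g (tup q l 1 k)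
      \<longrightarrow> R g (tup (q \<circ> \<sigma>) (l \<circ> \<sigma>) 1 k))"

definition H1 :: "('g \<times> 'l) set \<Rightarrow> nat \<Rightarrow> ('g \<Rightarrow> (nat \<times> 'l) list \<Rightarrow> bool) \<Rightarrow> bool" where
  "H1 Init k R \<longleftrightarrow> (\<forall>g q l. inj_on q {1..k} \<longrightarrow> (\<forall>i\<in>{1..k}. (g, l i) \<in> Init)
      \<longrightarrow> R g (tup q l 1 k))"

definition H2 :: "(nat \<Rightarrow> (('g \<times> 'l) \<times> ('g \<times> 'l)) set) \<Rightarrow> nat \<Rightarrow>
    ('g \<Rightarrow> (nat \<times> 'l) list \<Rightarrow> bool) \<Rightarrow> bool" where
  "H2 Trans k R \<longleftrightarrow> (\<forall>g g' q l l1'. inj_on q {1..k} \<longrightarrow>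
      ((g, l 1), (g', l1')) \<in> Trans (q 1) \<longrightarrow> R g (tup q l 1 k)
      \<longrightarrow> R g' (tup q (l(1 := l1')) 1 k))"

definition H3 :: "(nat \<Rightarrow> (('g \<times> 'l) \<times> ('g \<times> 'l)) set) \<Rightarrow> nat \<Rightarrow>
    ('g \<Rightarrow> (nat \<times> 'l) list \<Rightarrow> bool) \<Rightarrow> bool" where
  "H3 Trans k R \<longleftrightarrow> (\<forall>g g' q l l0'. inj_on q {0..k} \<longrightarrow>
      ((g, l 0), (g', l0')) \<in> Trans (q 0) \<longrightarrow> RConj k R g q l 0 k
      \<longrightarrow> R g' (tup q l 1 k))"

definition H4 :: "(nat \<times> ('g \<times> 'l) set) list \<Rightarrow> nat \<Rightarrow>
    ('g \<Rightarrow> (nat \<times> 'l) list \<Rightarrow> bool) \<Rightarrow> bool" where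
  "H4 errs k R \<longleftrightarrow> (let m = length errs; r = max m k in
     (\<forall>g q l. inj_on q {1..r} \<longrightarrow>
        (\<forall>j\<in>{1..m}. q j = fst (errs ! (j - 1)) \<and> (g, l j) \<in> snd (errs ! (j - 1)))
        \<longrightarrow> RConj k R g q l 1 r \<longrightarrow> False))"

definition solvable :: "('g \<times> 'l) set \<Rightarrow> (nat \<Rightarrow> (('g \<times> 'l) \<times> ('g \<times> 'l)) set) \<Rightarrow>
    (nat \<times> ('g \<times> 'l) set) list \<Rightarrow> nat \<Rightarrow> bool" where
  "solvable Init Trans errs k \<longleftrightarrow>
     (\<exists>R. H0 k R \<and> H1 Init k R \<and> H2 Trans k R \<and> H3 Trans k R \<and> H4 errs k R)"

end

theory Submission
  imports Defs
begin


lemma tup_set: "set (tup q l a b) = (\<lambda>i. (q i, l i)) ` {a..b}"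
  unfolding tup_def by auto

lemma tup_length[simp]: "length (tup q l a b) = Suc b - a"
  unfolding tup_def by (simp del: upt_Suc)

lemma tup_nth: "i < Suc b - a \<Longrightarrow> tup q l a b ! i = (q (a+i), l (a+i))"
  unfolding tup_def by (simp del: upt_Suc)

lemma tup_of_list: "tup (\<lambda>j. fst (ys!(j-1))) (\<lambda>j. snd (ys!(j-1))) 1 (length ys) = ys"
  by (rule nth_equalityI) (auto simp: tup_nth)

lemma inj_of_list: "distinct (map fst ys) \<Longrightarrow> inj_on (\<lambda>j. fst (ys!(j-1))) {1..length ys}"
  unfolding inj_on_def
  by (auto simp: distinct_conv_nth) (metis One_nat_def Suc_pred diff_less_mono le_simps(3) length_map nth_map zero_less_one)

lemma inj_of_list0: "distinct (map fst ys) \<Longrightarrow> length ys = Suc k \<Longrightarrow> inj_on (\<lambda>j. fst (ys!j)) {0..k}"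
  unfolding inj_on_def
  by (auto simp: distinct_conv_nth) (metis le_imp_less_Suc)

lemma RConj_list:
  fixes idx :: "nat \<Rightarrow> nat"
  assumes inc: "\<forall>i j. 1 \<le> i \<longrightarrow> i < j \<longrightarrow> j \<le> k \<longrightarrow> idx i < idx j"
    and rng: "\<forall>i\<in>{1..k}. idx i \<in> {a..b}"
  shows "length (map (\<lambda>j. (q (idx j), l (idx j))) [1..<Suc k]) = k"
    "set (map (\<lambda>j. (q (idx j), l (idx j))) [1..<Suc k]) \<subseteq> (\<lambda>i. (q i, l i)) ` {a..b}"
    "inj_on q {a..b} \<Longrightarrow> distinct (map fst (map (\<lambda>j. (q (idx j), l (idx j))) [1..<Suc k]))"
proof -
  show "length (map (\<lambda>j. (q (idx j), l (idx j))) [1..<Suc k]) = k" by simp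
  show "set (map (\<lambda>j. (q (idx j), l (idx j))) [1..<Suc k]) \<subseteq> (\<lambda>i. (q i, l i)) ` {a..b}"
    using rng by auto
  assume iq: "inj_on q {a..b}"
  have ii: "inj_on idx {1..k}"
  proof (rule inj_onI)
    fix x y assume "x \<in> {1..k}" "y \<in> {1..k}" "idx x = idx y"
    then show "x = y"
    proof (cases x y rule: linorder_cases)
      case less
      have "idx x < idx y" using inc less \<open>x \<in> {1..k}\<close> \<open>y \<in> {1..k}\<close> by simp
      then show ?thesis using \<open>idx x = idx y\<close> by (metis less_irrefl)
    next
      case greater
      have "idx y < idx x" using inc greater \<open>x \<in> {1..k}\<close> \<open>y \<in> {1..k}\<close> by simp
      then show ?thesis using \<open>idx x = idx y\<close> by (metis less_irrefl)
    qed
  qed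
  have "inj_on (q \<circ> idx) {1..k}"
    by (rule comp_inj_on[OF ii]) (rule inj_on_subset[OF iq], use rng in auto)
  then show "distinct (map fst (map (\<lambda>j. (q (idx j), l (idx j))) [1..<Suc k]))"
  proof -
    have "set [1..<Suc k] = {1..k}" by auto
    then show ?thesis using \<open>inj_on (q \<circ> idx) {1..k}\<close>
      by (simp add: distinct_map o_def del: upt_Suc)
  qed
qed

lemma RConj_sorted:
  assumes "RConj k R g q l a b" "T \<subseteq> {a..b}" "card T = k"
  shows "R g (map (\<lambda>i. (q i, l i)) (sorted_list_of_set T))"
proof -
  define sl where "sl = sorted_list_of_set T"
  have fin: "finite T" using assms(2) finite_subset by blast
  have len: "length sl = k" using assms(3) fin by (simp add: sl_def)
  have ss: "sorted_wrt (<) sl" unfolding sl_def by (rule strict_sorted_list_of_set)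
  have st: "set sl = T" using fin by (simp add: sl_def)
  define idx where "idx j = sl ! (j - 1)" for j
  have inc: "\<forall>i j. 1 \<le> i \<longrightarrow> i < j \<longrightarrow> j \<le> k \<longrightarrow> idx i < idx j"
    unfolding idx_def using sorted_wrt_nth_less[OF ss] len by auto
  have rng: "\<forall>i\<in>{1..k}. idx i \<in> {a..b}"
  proof
    fix i assume "i \<in> {1..k}"
    then have "sl ! (i-1) \<in> set sl" using len by auto
    then show "idx i \<in> {a..b}" unfolding idx_def using st assms(2) by blast
  qed
  have "R g (map (\<lambda>j. (q (idx j), l (idx j))) [1..<Suc k])"
    using assms(1) inc rng unfolding RConj_def by blast
  moreover have "map (\<lambda>j. (q (idx j), l (idx j))) [1..<Suc k] = map (\<lambda>i. (q i, l i)) sl"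
    by (rule nth_equalityI) (auto simp: len idx_def simp del: upt_Suc)
  ultimately show ?thesis by (simp add: sl_def)
qed



lemma H1_list:
  assumes "H1 Init k R" "length ys = k" "distinct (map fst ys)" "\<forall>x\<in>set ys. (g, snd x) \<in> Init"
  shows "R g ys"
proof -
  have "R g (tup (\<lambda>j. fst (ys!(j-1))) (\<lambda>j. snd (ys!(j-1))) 1 k)"
    using assms(1) unfolding H1_def
  proof (elim allE impE)
    show "inj_on (\<lambda>j. fst (ys!(j-1))) {1..k}" using inj_of_list[OF assms(3)] assms(2) by simp
    show "\<forall>i\<in>{1..k}. (g, snd (ys ! (i - 1))) \<in> Init" using assms(2,4) by auto
  qed
  then show ?thesis using tup_of_list[of ys] assms(2) by simp
qed

lemma H2_list:
  assumes "H2 Trans k R" "length ((p,l0)#rest) = k" "distinct (map fst ((p,l0)#rest))"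
    "((g, l0), (g', l1')) \<in> Trans p" "R g ((p,l0)#rest)"
  shows "R g' ((p,l1')#rest)"
proof -
  let ?xs = "(p,l0)#rest"
  let ?q = "\<lambda>j. fst (?xs!(j-1))" and ?l = "\<lambda>j. snd (?xs!(j-1))"
  have imp: "inj_on ?q {1..k} \<longrightarrow> ((g, ?l 1),(g', l1')) \<in> Trans (?q 1) \<longrightarrow> R g (tup ?q ?l 1 k)
     \<longrightarrow> R g' (tup ?q (?l(1:=l1')) 1 k)"
    using assms(1)[unfolded H2_def, THEN spec[of _ g], THEN spec[of _ g'], THEN spec[of _ ?q],
      THEN spec[of _ ?l], THEN spec[of _ l1']] .
  have i1: "inj_on ?q {1..k}" using inj_of_list[OF assms(3)] assms(2) by simp
  have i2: "((g, ?l 1),(g', l1')) \<in> Trans (?q 1)" using assms(4) by simp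
  have i3: "R g (tup ?q ?l 1 k)" using tup_of_list[of ?xs] assms(2,5) by simp
  have "R g' (tup (\<lambda>j. fst (?xs!(j-1))) ((\<lambda>j. snd (?xs!(j-1)))(1:=l1')) 1 k)"
    using imp i1 i2 i3 by blast
  moreover have "tup (\<lambda>j. fst (?xs!(j-1))) ((\<lambda>j. snd (?xs!(j-1)))(1:=l1')) 1 k = (p,l1')#rest"
  proof (rule nth_equalityI)
    show "length (tup (\<lambda>j. fst (?xs!(j-1))) ((\<lambda>j. snd (?xs!(j-1)))(1:=l1')) 1 k) = length ((p,l1')#rest)"
      using assms(2) by simp
    fix i assume "i < length (tup (\<lambda>j. fst (?xs!(j-1))) ((\<lambda>j. snd (?xs!(j-1)))(1:=l1')) 1 k)"
    then have "i < k" by simp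
    then show "tup (\<lambda>j. fst (?xs!(j-1))) ((\<lambda>j. snd (?xs!(j-1)))(1:=l1')) 1 k ! i = ((p,l1')#rest) ! i"
      by (cases i) (auto simp: tup_nth)
  qed
  ultimately show ?thesis by simp
qed

lemma H3_list:
  assumes "H3 Trans k R" "length ys = k" "distinct (map fst (x0 # ys))"
    "((g, snd x0), (g', l0')) \<in> Trans (fst x0)"
    "\<forall>zs. set zs \<subseteq> set (x0#ys) \<longrightarrow> distinct (map fst zs) \<longrightarrow> length zs = k \<longrightarrow> R g zs"
  shows "R g' ys"
proof -
  let ?xs = "x0 # ys"
  let ?q = "\<lambda>j. fst (?xs!j)" and ?l = "\<lambda>j. snd (?xs!j)"
  have inj: "inj_on ?q {0..k}" using inj_of_list0[OF assms(3)] assms(2) by simp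
  have "R g' (tup ?q ?l 1 k)"
    using assms(1) unfolding H3_def
  proof (elim allE impE)
    show "inj_on ?q {0..k}" by (rule inj)
    show "((g, ?l 0), (g', l0')) \<in> Trans (?q 0)" using assms(4) by simp
    show "RConj k R g ?q ?l 0 k"
      unfolding RConj_def
    proof (intro allI impI, elim conjE)
      fix idx :: "nat \<Rightarrow> nat"
      assume inc: "\<forall>i j. 1 \<le> i \<longrightarrow> i < j \<longrightarrow> j \<le> k \<longrightarrow> idx i < idx j"
        and rng: "\<forall>i\<in>{1..k}. idx i \<in> {0..k}"
      note L = RConj_list[OF inc rng, of ?q ?l]
      have "(\<lambda>i. (?q i, ?l i)) ` {0..k} \<subseteq> set ?xs"
      proof
        fix z assume "z \<in> (\<lambda>i. (?q i, ?l i)) ` {0..k}"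
        then obtain i where "i \<in> {0..k}" "z = (?q i, ?l i)" by blast
        then have "z = ?xs ! i" "i < length ?xs" using assms(2) by auto
        then show "z \<in> set ?xs" using nth_mem by metis
      qed
      then show "R g (map (\<lambda>j. (?q (idx j), ?l (idx j))) [1..<Suc k])"
        using assms(5) L(1) L(2) L(3)[OF inj] by blast
    qed
  qed
  moreover have "tup ?q ?l 1 k = ys"
    by (rule nth_equalityI) (use assms(2) in \<open>auto simp: tup_nth\<close>)
  ultimately show ?thesis by simp
qed

lemma Rperm:
  assumes "H0 k R" "length ys = k" "distinct (map fst ys)" "mset ys' = mset ys" "R g ys"
  shows "R g ys'"
proof -
  obtain f where f: "f permutes {..<length ys}" "permute_list f ys = ys'"
    using mset_eq_permutation[OF assms(4)] by blast
  define \<sigma> where "\<sigma> i = (if i \<in> {1..k} then Suc (f (i - 1)) else i)" for i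
  have fin: "\<And>i. i < k \<Longrightarrow> f i < k" using permutes_in_image[OF f(1)] assms(2) by auto
  have "inj_on \<sigma> {1..k}"
  proof (rule inj_onI)
    fix x y assume "x \<in> {1..k}" "y \<in> {1..k}" "\<sigma> x = \<sigma> y"
    then have "f (x-1) = f (y-1)" by (simp add: \<sigma>_def)
    then have "x - 1 = y - 1" using permutes_inj[OF f(1)] by (simp add: inj_eq)
    then show "x = y" using \<open>x \<in> {1..k}\<close> \<open>y \<in> {1..k}\<close> by auto
  qed
  moreover have "\<sigma> ` {1..k} \<subseteq> {1..k}"
  proof
    fix y assume "y \<in> \<sigma> ` {1..k}"
    then obtain x where x: "x \<in> {1..k}" "y = \<sigma> x" by blast
    then have "f (x - 1) < k" using fin by auto
    then show "y \<in> {1..k}" using x by (auto simp: \<sigma>_def)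
  qed
  ultimately have "\<sigma> ` {1..k} = {1..k}"
    by (simp add: card_image card_subset_eq)
  then have bij: "bij_betw \<sigma> {1..k} {1..k}" using \<open>inj_on \<sigma> {1..k}\<close> by (simp add: bij_betw_def)
  have perm: "\<sigma> permutes {1..k}"
    by (rule bij_imp_permutes[OF bij]) (auto simp add: \<sigma>_def)
  let ?q = "\<lambda>j. fst (ys!(j-1))" and ?l = "\<lambda>j. snd (ys!(j-1))"
  have "R g (tup (?q \<circ> \<sigma>) (?l \<circ> \<sigma>) 1 k)"
    using assms(1) unfolding H0_def
  proof (elim allE impE)
    show "\<sigma> permutes {1..k}" by (rule perm)
    show "inj_on ?q {1..k}" using inj_of_list[OF assms(3)] assms(2) by simp
    show "R g (tup ?q ?l 1 k)" using tup_of_list[of ys] assms(2,5) by simp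
  qed
  moreover have "tup (?q \<circ> \<sigma>) (?l \<circ> \<sigma>) 1 k = ys'"
  proof (rule nth_equalityI)
    show "length (tup (?q \<circ> \<sigma>) (?l \<circ> \<sigma>) 1 k) = length ys'"
      using f(2) assms(2) by auto
    fix i assume "i < length (tup (?q \<circ> \<sigma>) (?l \<circ> \<sigma>) 1 k)"
    then have i: "i < k" by simp
    have "ys' ! i = ys ! f i" using f i assms(2) by (auto simp: permute_list_nth)
    then show "tup (?q \<circ> \<sigma>) (?l \<circ> \<sigma>) 1 k ! i = ys' ! i"
      using i by (simp add: tup_nth \<sigma>_def)
  qed
  ultimately show ?thesis by simp
qed



definition Rup :: "nat \<Rightarrow> ('g \<Rightarrow> (nat \<times> 'l) list \<Rightarrow> bool) \<Rightarrow> 'g \<Rightarrow> (nat \<times> 'l) list \<Rightarrow> bool" where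
  "Rup k R g xs \<longleftrightarrow> (\<forall>ys. set ys \<subseteq> set xs \<longrightarrow> distinct (map fst ys) \<longrightarrow> length ys = k \<longrightarrow> R g ys)"

lemma RConj_down:
  assumes "RConj k' (Rup k R) g q l a b" "k \<le> k'" "k' \<le> Suc b - a"
    "set zs \<subseteq> (\<lambda>i. (q i, l i)) ` {a..b}" "distinct (map fst zs)" "length zs = k"
  shows "R g zs"
proof -
  let ?f = "\<lambda>i. (q i, l i)"
  obtain U where U: "U \<subseteq> {a..b}" "inj_on ?f U" "set zs = ?f ` U"
    using assms(4) subset_image_inj by meson
  have dz: "distinct zs" using assms(5) by (simp add: distinct_map)
  have "card U = k" using card_image[OF U(2)] U(3) distinct_card[OF dz] assms(6) by simp
  then obtain T where T: "U \<subseteq> T" "T \<subseteq> {a..b}" "card T = k'"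
    using exists_subset_between[of U k' "{a..b}"] assms(2,3) U(1) by auto
  have fT: "finite T" using T(2) finite_subset by blast
  have "Rup k R g (map ?f (sorted_list_of_set T))"
    by (rule RConj_sorted[OF assms(1) T(2,3)])
  moreover have "set zs \<subseteq> set (map ?f (sorted_list_of_set T))"
    using fT T(1) U(3) by auto
  ultimately show ?thesis using assms(5,6) unfolding Rup_def by blast
qed

lemma part1:
  assumes pos: "0 < k" and kk: "k < k'" and sol: "solvable Init Trans errs k"
  shows "solvable Init Trans errs k'"
proof -
  obtain R where h0: "H0 k R" and h1: "H1 Init k R" and h2: "H2 Trans k R"
    and h3: "H3 Trans k R" and h4: "H4 errs k R"
    using sol unfolding solvable_def by blast
  let ?R = "Rup k R"
  have "H0 k' ?R"
    unfolding H0_def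
  proof (intro allI impI)
    fix \<sigma> g and q :: "nat \<Rightarrow> nat" and l
    assume p: "\<sigma> permutes {1..k'}" and r: "Rup k R g (tup q l 1 k')"
    have "set (tup (q \<circ> \<sigma>) (l \<circ> \<sigma>) 1 k') = set (tup q l 1 k')"
    proof -
      have "(\<lambda>i. ((q \<circ> \<sigma>) i, (l \<circ> \<sigma>) i)) ` {1..k'} = (\<lambda>i. (q i, l i)) ` (\<sigma> ` {1..k'})"
        by (simp add: image_image)
      also have "\<dots> = (\<lambda>i. (q i, l i)) ` {1..k'}" using permutes_image[OF p] by simp
      finally show ?thesis unfolding tup_set .
    qed
    then show "Rup k R g (tup (q \<circ> \<sigma>) (l \<circ> \<sigma>) 1 k')" using r unfolding Rup_def by simp
  qed
  moreover have "H1 Init k' ?R"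
    unfolding H1_def Rup_def
  proof (intro allI impI)
    fix g q l ys
    assume a: "\<forall>i\<in>{1..k'}. (g, l i) \<in> Init" "set ys \<subseteq> set (tup q l 1 k')"
      "distinct (map fst ys)" "length ys = k"
    have "\<forall>x\<in>set ys. (g, snd x) \<in> Init" using a(1,2) unfolding tup_set by auto
    then show "R g ys" using H1_list[OF h1 a(4,3)] by blast
  qed
  moreover have "H2 Trans k' ?R"
    unfolding H2_def
  proof (intro allI impI)
    fix g g' q l l1'
    assume iq: "inj_on q {1..k'}" and tr: "((g, l 1), g', l1') \<in> Trans (q 1)"
      and r: "Rup k R g (tup q l 1 k')"
    let ?f = "\<lambda>i. (q i, l i)" and ?f' = "\<lambda>i. (q i, (l(1 := l1')) i)"
    show "Rup k R g' (tup q (l(1 := l1')) 1 k')"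
      unfolding Rup_def
    proof (intro allI impI)
      fix ys assume ys: "set ys \<subseteq> set (tup q (l(1 := l1')) 1 k')" "distinct (map fst ys)" "length ys = k"
      have ys': "set ys \<subseteq> ?f' ` {1..k'}" using ys(1) unfolding tup_set .
      have dys: "distinct ys" using ys(2) by (simp add: distinct_map)
      have injfst: "inj_on fst (set ys)" using ys(2) by (simp add: distinct_map)
      have k1: "1 \<in> {1..k'}" using pos kk by auto
      show "R g' ys"
      proof (cases "\<exists>y\<in>set ys. fst y = q 1")
        case True
        then obtain y where y: "y \<in> set ys" "fst y = q 1" by blast
        obtain i where i: "i \<in> {1..k'}" "y = ?f' i" using ys' y(1) by blast
        have "i = 1" using iq i y(2) k1 by (auto dest: inj_onD)
        then have yv: "y = (q 1, l1')" using i by simp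
        define rest where "rest = remove1 y ys"
        have srest: "set rest = set ys - {y}" unfolding rest_def using dys by simp
        have rest_old: "set rest \<subseteq> ?f ` {1..k'}"
        proof
          fix z assume z: "z \<in> set rest"
          then have zy: "z \<in> set ys" "z \<noteq> y" using srest by auto
          then have "fst z \<noteq> q 1" using injfst y by (metis inj_onD)
          moreover obtain j where "j \<in> {1..k'}" "z = ?f' j" using ys' zy(1) by blast
          ultimately show "z \<in> ?f ` {1..k'}" by (cases "j = 1") auto
        qed
        have q1rest: "q 1 \<notin> fst ` set rest"
        proof
          assume "q 1 \<in> fst ` set rest"
          then obtain z where "z \<in> set rest" "fst z = q 1" by (metis imageE)
          then show False using srest injfst y by (metis DiffE inj_onD singletonI)
        qed
        have drest: "distinct (map fst rest)"
          using dys injfst srest by (simp add: distinct_map rest_def inj_on_subset)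
        have lrest: "length rest = k - 1" unfolding rest_def using y(1) ys(3) by (simp add: length_remove1)
        have len0: "length ((q 1, l 1) # rest) = k" using lrest pos by simp
        have d0: "distinct (map fst ((q 1, l 1) # rest))" using drest q1rest by simp
        have "R g ((q 1, l 1) # rest)"
          using r unfolding Rup_def
        proof (elim allE impE)
          show "set ((q 1, l 1) # rest) \<subseteq> set (tup q l 1 k')"
            unfolding tup_set using rest_old k1 by auto
        qed (use d0 len0 in auto)
        then have "R g' ((q 1, l1') # rest)"
          using H2_list[OF h2 len0 d0 tr] by blast
        moreover have "mset ys = mset ((q 1, l1') # rest)"
          using y(1) yv unfolding rest_def by simp
        moreover have "distinct (map fst ((q 1, l1') # rest))" using drest q1rest by simp
        moreover have "length ((q 1, l1') # rest) = k" using len0 by simp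
        ultimately show ?thesis using Rperm[OF h0] by metis
      next
        case False
        have old: "set ys \<subseteq> ?f ` {1..k'}"
        proof
          fix z assume z: "z \<in> set ys"
          obtain j where "j \<in> {1..k'}" "z = ?f' j" using ys' z by blast
          then show "z \<in> ?f ` {1..k'}" using False z by (cases "j = 1") auto
        qed
        have d0: "distinct (map fst ((q 1, l 1) # ys))" using False ys(2) by auto
        show ?thesis
        proof (rule H3_list[OF h3 ys(3) d0])
          show "((g, snd (q 1, l 1)), g', l1') \<in> Trans (fst (q 1, l 1))" using tr by simp
          show "\<forall>zs. set zs \<subseteq> set ((q 1, l 1) # ys) \<longrightarrow> distinct (map fst zs) \<longrightarrow> length zs = k \<longrightarrow> R g zs"
          proof (intro allI impI)
            fix zs assume "set zs \<subseteq> set ((q 1, l 1) # ys)" "distinct (map fst zs)" "length zs = k"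
            moreover have "set ((q 1, l 1) # ys) \<subseteq> set (tup q l 1 k')"
              unfolding tup_set using old k1 by auto
            ultimately show "R g zs" using r unfolding Rup_def by blast
          qed
        qed
      qed
    qed
  qed
  moreover have "H3 Trans k' ?R"
    unfolding H3_def
  proof (intro allI impI)
    fix g g' q l l0'
    assume iq: "inj_on q {0..k'}" and tr: "((g, l 0), g', l0') \<in> Trans (q 0)"
      and rc: "RConj k' (Rup k R) g q l 0 k'"
    let ?f = "\<lambda>i. (q i, l i)"
    show "Rup k R g' (tup q l 1 k')"
      unfolding Rup_def
    proof (intro allI impI)
      fix ys assume ys: "set ys \<subseteq> set (tup q l 1 k')" "distinct (map fst ys)" "length ys = k"
      have ys': "set ys \<subseteq> ?f ` {1..k'}" using ys(1) unfolding tup_set .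
      have "q 0 \<notin> fst ` set ys"
      proof
        assume "q 0 \<in> fst ` set ys"
        then obtain j where "j \<in> {1..k'}" "q j = q 0" using ys' by auto
        then show False using iq by (auto dest: inj_onD)
      qed
      then have d0: "distinct (map fst ((q 0, l 0) # ys))" using ys(2) by simp
      show "R g' ys"
      proof (rule H3_list[OF h3 ys(3) d0])
        show "((g, snd (q 0, l 0)), g', l0') \<in> Trans (fst (q 0, l 0))" using tr by simp
        show "\<forall>zs. set zs \<subseteq> set ((q 0, l 0) # ys) \<longrightarrow> distinct (map fst zs) \<longrightarrow> length zs = k \<longrightarrow> R g zs"
        proof (intro allI impI)
          fix zs assume zs: "set zs \<subseteq> set ((q 0, l 0) # ys)" "distinct (map fst zs)" "length zs = k"
          have s1: "?f ` {1..k'} \<subseteq> ?f ` {0..k'}" by (rule image_mono) auto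
          have s2: "?f 0 \<in> ?f ` {0..k'}" by (rule imageI) simp
          have "set zs \<subseteq> ?f ` {0..k'}" using zs(1) ys' s1 s2 by (metis (no_types, lifting) dual_order.trans insert_subset set_simps(2))
          then show "R g zs" using RConj_down[OF rc _ _ _ zs(2,3)] kk by simp
        qed
      qed
    qed
  qed
  moreover have "H4 errs k' ?R"
    unfolding H4_def Let_def
  proof (intro allI impI)
    fix g q l
    assume iq: "inj_on q {1..max (length errs) k'}"
      and er: "\<forall>j\<in>{1..length errs}. q j = fst (errs ! (j - 1)) \<and> (g, l j) \<in> snd (errs ! (j - 1))"
      and rc: "RConj k' (Rup k R) g q l 1 (max (length errs) k')"
    let ?m = "length errs"
    have sub: "{1..max ?m k} \<subseteq> {1..max ?m k'}" using kk by auto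
    have iq': "inj_on q {1..max ?m k}" using inj_on_subset[OF iq sub] .
    have "RConj k R g q l 1 (max ?m k)"
      unfolding RConj_def
    proof (intro allI impI, elim conjE)
      fix idx :: "nat \<Rightarrow> nat"
      assume inc: "\<forall>i j. 1 \<le> i \<longrightarrow> i < j \<longrightarrow> j \<le> k \<longrightarrow> idx i < idx j"
        and rng: "\<forall>i\<in>{1..k}. idx i \<in> {1..max ?m k}"
      note L = RConj_list[OF inc rng, of q l]
      have "set (map (\<lambda>j. (q (idx j), l (idx j))) [1..<Suc k]) \<subseteq> (\<lambda>i. (q i, l i)) ` {1..max ?m k'}"
        using L(2) sub by blast
      then show "R g (map (\<lambda>j. (q (idx j), l (idx j))) [1..<Suc k])"
        using RConj_down[OF rc _ _ _ L(3)[OF iq'] L(1)] kk by simp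
    qed
    then show False using h4 iq' er unfolding H4_def Let_def by blast
  qed
  ultimately show ?thesis unfolding solvable_def by blast
qed



definition TrE :: "nat \<Rightarrow> nat \<Rightarrow> ((nat \<times> nat) \<times> (nat \<times> nat)) set" where
  "TrE k p = {(a, b). p \<le> k \<and> snd a = 1 \<and> b = (fst a + 1, 2)}"

definition errE :: "nat \<Rightarrow> (nat \<times> (nat \<times> nat) set) list" where
  "errE k = map (\<lambda>j. (j, {(1, 1)})) [0..<Suc k]"

definition RE :: "nat \<Rightarrow> nat \<Rightarrow> (nat \<times> nat) list \<Rightarrow> bool" where
  "RE k g xs \<longleftrightarrow> g + card {i\<in>{0..k}. (i, 1) \<in> set xs} \<le> Suc k"

lemma errE_len[simp]: "length (errE k) = Suc k" by (simp add: errE_def)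
lemma errE_nth: "j \<in> {1..Suc k} \<Longrightarrow> errE k ! (j - 1) = (j - 1, {(1,1)})"
  unfolding errE_def by (auto simp del: upt_Suc)

lemma errE_spec: "error_spec (errE k)"
  unfolding error_spec_def errE_def by (simp add: o_def del: upt_Suc)

lemma card_cnt_le: "card {i\<in>{0..k}. P i} \<le> Suc k"
  by (metis (no_types, lifting) card_atLeastAtMost card_mono finite_atLeastAtMost mem_Collect_eq subsetI diff_zero)

lemma not_solvable_k:
  assumes pos: "0 < k"
  shows "\<not> solvable {(0, 1)} (TrE k) (errE k) k"
proof
  assume "solvable {(0, 1)} (TrE k) (errE k) k"
  then obtain R where h1: "H1 {(0,1)} k R" and h3: "H3 (TrE k) k R" and h4: "H4 (errE k) k R"
    unfolding solvable_def by blast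
  let ?q = "\<lambda>j::nat. j - 1" and ?l = "\<lambda>j::nat. 1::nat"
  have iq: "inj_on ?q {1..Suc k}" by (auto simp: inj_on_def)
  have er: "\<forall>j\<in>{1..length (errE k)}. ?q j = fst (errE k ! (j - 1)) \<and> (1, ?l j) \<in> snd (errE k ! (j - 1))"
  proof
    fix j assume "j \<in> {1..length (errE k)}"
    then have "errE k ! (j - 1) = (j - 1, {(1,1)})" using errE_nth by simp
    then show "?q j = fst (errE k ! (j - 1)) \<and> (1, ?l j) \<in> snd (errE k ! (j - 1))" by simp
  qed
  have "RConj k R 1 ?q ?l 1 (Suc k)"
    unfolding RConj_def
  proof (intro allI impI, elim conjE)
    fix idx :: "nat \<Rightarrow> nat"
    assume inc: "\<forall>i j. 1 \<le> i \<longrightarrow> i < j \<longrightarrow> j \<le> k \<longrightarrow> idx i < idx j"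
      and rng: "\<forall>i\<in>{1..k}. idx i \<in> {1..Suc k}"
    note L = RConj_list[OF inc rng, of ?q ?l]
    define zs where "zs = map (\<lambda>j. (?q (idx j), ?l (idx j))) [1..<Suc k]"
    have lz: "length zs = k" and sz: "set zs \<subseteq> (\<lambda>i. (?q i, ?l i)) ` {1..Suc k}"
      and dz: "distinct (map fst zs)" using L iq unfolding zs_def by auto
    have "\<exists>p0\<in>{0..k}. p0 \<notin> set (map fst zs)"
    proof (rule ccontr)
      assume "\<not> ?thesis"
      then have "{0..k} \<subseteq> set (map fst zs)" by auto
      then have "card {0..k} \<le> card (set (map fst zs))" by (intro card_mono) auto
      also have "\<dots> = k" using distinct_card[OF dz] lz by simp
      finally show False by simp
    qed
    then obtain p0 where p0: "p0 \<le> k" "p0 \<notin> fst ` set zs" by auto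
    have "R 1 zs"
    proof (rule H3_list[OF h3 lz, of "(p0, 1)" 0])
      show "distinct (map fst ((p0, 1) # zs))" using dz p0 by simp
      show "((0, snd (p0, 1::nat)), 1, 2) \<in> TrE k (fst (p0, 1::nat))" using p0 by (simp add: TrE_def)
      show "\<forall>ws. set ws \<subseteq> set ((p0, 1) # zs) \<longrightarrow> distinct (map fst ws) \<longrightarrow> length ws = k \<longrightarrow> R 0 ws"
      proof (intro allI impI)
        fix ws assume ws: "set ws \<subseteq> set ((p0, 1) # zs)" "distinct (map fst ws)" "length ws = k"
        have "\<forall>x\<in>set ws. (0::nat, snd x) \<in> {(0, 1::nat)}"
        proof
          fix x assume "x \<in> set ws"
          then have "x \<in> set ((p0, 1) # zs)" using ws(1) by blast
          then consider "x = (p0, 1)" | "x \<in> set zs" by auto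
          then have "snd x = 1"
          proof cases
            case 2
            then obtain i where "x = (i - 1, 1)" using sz by blast
            then show ?thesis by simp
          qed simp
          then show "(0::nat, snd x) \<in> {(0, 1::nat)}" by simp
        qed
        then show "R 0 ws" using H1_list[OF h1 ws(3,2)] by blast
      qed
    qed
    then show "R 1 (map (\<lambda>j. (?q (idx j), ?l (idx j))) [1..<Suc k])" unfolding zs_def .
  qed
  moreover have "max (length (errE k)) k = Suc k" by simp
  ultimately show False using h4 iq er unfolding H4_def Let_def by metis
qed

lemma solvable_k':
  assumes kk: "k < k'"
  shows "solvable {(0, 1)} (TrE k) (errE k) k'"
  unfolding solvable_def
proof (intro exI conjI)
  let ?R = "RE k"
  show "H0 k' ?R"
    unfolding H0_def
  proof (intro allI impI)
    fix \<sigma> and g :: nat and q :: "nat \<Rightarrow> nat" and l :: "nat \<Rightarrow> nat"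
    assume p: "\<sigma> permutes {1..k'}" and r: "RE k g (tup q l 1 k')"
    have "set (tup (q \<circ> \<sigma>) (l \<circ> \<sigma>) 1 k') = set (tup q l 1 k')"
    proof -
      have "(\<lambda>i. ((q \<circ> \<sigma>) i, (l \<circ> \<sigma>) i)) ` {1..k'} = (\<lambda>i. (q i, l i)) ` (\<sigma> ` {1..k'})"
        by (simp add: image_image)
      also have "\<dots> = (\<lambda>i. (q i, l i)) ` {1..k'}" using permutes_image[OF p] by simp
      finally show ?thesis unfolding tup_set .
    qed
    then show "RE k g (tup (q \<circ> \<sigma>) (l \<circ> \<sigma>) 1 k')" using r unfolding RE_def by simp
  qed
  show "H1 {(0,1)} k' ?R"
    unfolding H1_def
  proof (intro allI impI)
    fix g :: nat and q :: "nat \<Rightarrow> nat" and l :: "nat \<Rightarrow> nat"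
    assume a: "\<forall>i\<in>{1..k'}. (g, l i) \<in> {(0, 1)}"
    have "1 \<in> {1..k'}" using kk by auto
    then have "(g, l 1) \<in> {(0, 1)}" using a by blast
    then have "g = 0" by simp
    then show "RE k g (tup q l 1 k')" unfolding RE_def using card_cnt_le by simp
  qed
  show "H2 (TrE k) k' ?R"
    unfolding H2_def
  proof (intro allI impI)
    fix g g' :: nat and q :: "nat \<Rightarrow> nat" and l :: "nat \<Rightarrow> nat" and l1'
    assume iq: "inj_on q {1..k'}" and tr: "((g, l 1), g', l1') \<in> TrE k (q 1)"
      and r: "RE k g (tup q l 1 k')"
    have t: "q 1 \<le> k" "l 1 = 1" "g' = g + 1" "l1' = 2" using tr by (auto simp: TrE_def)
    have k1: "1 \<in> {1..k'}" using kk by auto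
    let ?C = "{i\<in>{0..k}. (i, 1) \<in> set (tup q l 1 k')}"
    let ?C' = "{i\<in>{0..k}. (i, 1) \<in> set (tup q (l(1 := l1')) 1 k')}"
    have "?C' = ?C - {q 1}"
    proof (intro set_eqI iffI)
      fix i assume "i \<in> ?C'"
      then obtain j where j: "i \<le> k" "j \<in> {1..k'}" "q j = i" "(l(1 := l1')) j = 1" unfolding tup_set by auto
      then have "j \<noteq> 1" using t by auto
      then have "i \<noteq> q 1" using iq j k1 by (auto dest: inj_onD)
      then show "i \<in> ?C - {q 1}" using j \<open>j \<noteq> 1\<close> unfolding tup_set by force
    next
      fix i assume "i \<in> ?C - {q 1}"
      then obtain j where j: "i \<le> k" "j \<in> {1..k'}" "q j = i" "l j = 1" "i \<noteq> q 1" unfolding tup_set by auto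
      then have "j \<noteq> 1" by auto
      then show "i \<in> ?C'" using j unfolding tup_set by force
    qed
    moreover have "q 1 \<in> ?C" using t k1 unfolding tup_set by force
    moreover have "finite ?C" by simp
    ultimately have "card ?C' = card ?C - 1" by simp
    moreover have "card ?C \<ge> 1" using \<open>q 1 \<in> ?C\<close> \<open>finite ?C\<close> by (metis One_nat_def Suc_leI card_gt_0_iff empty_iff)
    ultimately show "RE k g' (tup q (l(1 := l1')) 1 k')" using r t unfolding RE_def by simp
  qed
  show "H3 (TrE k) k' ?R"
    unfolding H3_def
  proof (intro allI impI)
    fix g g' :: nat and q :: "nat \<Rightarrow> nat" and l :: "nat \<Rightarrow> nat" and l0'
    assume iq: "inj_on q {0..k'}" and tr: "((g, l 0), g', l0') \<in> TrE k (q 0)"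
      and rc: "RConj k' (RE k) g q l 0 k'"
    have t: "q 0 \<le> k" "l 0 = 1" "g' = g + 1" using tr by (auto simp: TrE_def)
    let ?f = "\<lambda>i. (q i, l i)"
    have "\<exists>j0\<in>{1..k'}. \<not> (q j0 \<le> k \<and> l j0 = 1)"
    proof (rule ccontr)
      assume "\<not> ?thesis"
      then have "q ` {1..k'} \<subseteq> {0..k} - {q 0}" using iq by (auto dest: inj_onD)
      moreover have "inj_on q {1..k'}" using iq by (rule inj_on_subset) auto
      then have "card (q ` {1..k'}) = card {1..k'}" by (rule card_image)
      moreover have "card (q ` {1..k'}) \<le> card ({0..k} - {q 0})"
        using \<open>q ` {1..k'} \<subseteq> {0..k} - {q 0}\<close> by (intro card_mono) auto
      ultimately have "card {1..k'} \<le> card ({0..k} - {q 0})" by linarith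
      then show False using t kk by simp
    qed
    then obtain j0 where j0: "j0 \<in> {1..k'}" "\<not> (q j0 \<le> k \<and> l j0 = 1)" by blast
    define idx where "idx i = (if i \<le> j0 then i - 1 else i)" for i
    have inc: "\<forall>i j. 1 \<le> i \<longrightarrow> i < j \<longrightarrow> j \<le> k' \<longrightarrow> idx i < idx j"
      unfolding idx_def by auto
    have rng: "\<forall>i\<in>{1..k'}. idx i \<in> {0..k'}" unfolding idx_def by auto
    have rsub: "RE k g (map (\<lambda>j. (q (idx j), l (idx j))) [1..<Suc k'])"
      using rc inc rng unfolding RConj_def by blast
    have cover: "?f ` ({0..k'} - {j0}) \<subseteq> set (map (\<lambda>j. (q (idx j), l (idx j))) [1..<Suc k'])"
    proof
      fix z assume "z \<in> ?f ` ({0..k'} - {j0})"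
      then obtain x where x: "x \<in> {0..k'}" "x \<noteq> j0" "z = ?f x" by blast
      show "z \<in> set (map (\<lambda>j. (q (idx j), l (idx j))) [1..<Suc k'])"
      proof (cases "x < j0")
        case True
        then have "idx (x + 1) = x" "x + 1 \<in> set [1..<Suc k']" using j0 by (auto simp: idx_def)
        then show ?thesis using x by (metis (no_types, lifting) image_eqI list.set_map)
      next
        case False
        then have "idx x = x" "x \<in> set [1..<Suc k']" using j0 x by (auto simp: idx_def)
        then show ?thesis using x by (metis (no_types, lifting) image_eqI list.set_map)
      qed
    qed
    let ?C = "{i\<in>{0..k}. (i, 1) \<in> set (tup q l 1 k')}"
    let ?D = "{i\<in>{0..k}. (i, 1) \<in> set (map (\<lambda>j. (q (idx j), l (idx j))) [1..<Suc k'])}"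
    have q0C: "q 0 \<notin> ?C"
    proof
      assume "q 0 \<in> ?C"
      then obtain j where "j \<in> {1..k'}" "q j = q 0" unfolding tup_set by auto
      then show False using iq by (auto dest: inj_onD)
    qed
    have "insert (q 0) ?C \<subseteq> ?D"
    proof
      fix i assume "i \<in> insert (q 0) ?C"
      then consider "i = q 0" | "i \<in> ?C" by blast
      then show "i \<in> ?D"
      proof cases
        case 1
        have "?f 0 \<in> ?f ` ({0..k'} - {j0})" using j0 by auto
        then show ?thesis using 1 t cover by auto
      next
        case 2
        then obtain j where j: "i \<le> k" "j \<in> {1..k'}" "(i, 1) = ?f j" unfolding tup_set by auto
        then have "j \<noteq> j0" using j0 by auto
        then have "?f j \<in> ?f ` ({0..k'} - {j0})" using j by auto
        then show ?thesis using j cover by auto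
      qed
    qed
    then have "card (insert (q 0) ?C) \<le> card ?D" by (simp add: card_mono)
    then have "Suc (card ?C) \<le> card ?D" using q0C by simp
    then show "RE k g' (tup q l 1 k')" using rsub t unfolding RE_def by simp
  qed
  show "H4 (errE k) k' ?R"
    unfolding H4_def Let_def
  proof (intro allI impI)
    fix g :: nat and q :: "nat \<Rightarrow> nat" and l :: "nat \<Rightarrow> nat"
    assume er: "\<forall>j\<in>{1..length (errE k)}. q j = fst (errE k ! (j - 1)) \<and> (g, l j) \<in> snd (errE k ! (j - 1))"
      and rc: "RConj k' (RE k) g q l 1 (max (length (errE k)) k')"
    have mx: "max (length (errE k)) k' = k'" using kk by simp
    have e: "\<And>j. j \<in> {1..Suc k} \<Longrightarrow> q j = j - 1 \<and> g = 1 \<and> l j = 1"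
    proof -
      fix j assume j: "j \<in> {1..Suc k}"
      then have "errE k ! (j - 1) = (j - 1, {(1,1)})" by (rule errE_nth)
      moreover have "q j = fst (errE k ! (j - 1)) \<and> (g, l j) \<in> snd (errE k ! (j - 1))"
        using er j by simp
      ultimately show "q j = j - 1 \<and> g = 1 \<and> l j = 1" by simp
    qed
    have rc': "RConj k' (RE k) g q l 1 k'" using rc mx by simp
    have "RE k g (map (\<lambda>j. (q (id j), l (id j))) [1..<Suc k'])"
      by (rule rc'[unfolded RConj_def, THEN spec[of _ id], THEN mp]) simp
    then have "RE k g (map (\<lambda>j. (q j, l j)) [1..<Suc k'])" by (simp only: id_apply)
    moreover have "g = 1" using e[of 1] by simp
    moreover have "{i\<in>{0..k}. (i, 1) \<in> set (map (\<lambda>j. (q j, l j)) [1..<Suc k'])} = {0..k}"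
    proof (intro set_eqI iffI)
      fix i assume "i \<in> {0..k}"
      then have "q (i+1) = i" "l (i+1) = 1" "i + 1 \<in> set [1..<Suc k']" using e[of "i+1"] kk by auto
      then have h: "(i, 1) = (\<lambda>j. (q j, l j)) (i+1)" "i+1 \<in> set [1..<Suc k']" by simp_all
      from h(1) h(2) have "(i, 1) \<in> (\<lambda>j. (q j, l j)) ` set [1..<Suc k']" by (rule image_eqI)
      then have "(i, 1) \<in> set (map (\<lambda>j. (q j, l j)) [1..<Suc k'])" by (simp only: set_map)
      then show "i \<in> {i\<in>{0..k}. (i, 1) \<in> set (map (\<lambda>j. (q j, l j)) [1..<Suc k'])}"
        using \<open>i \<in> {0..k}\<close> by simp
    qed auto
    ultimately show False unfolding RE_def by simp
  qed
qed

theorem theorem1: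
  shows "(\<forall>(Init :: ('g \<times> 'l) set) Trans errs k k'.
            error_spec errs \<longrightarrow> 0 < k \<longrightarrow> k < k' \<longrightarrow>
            solvable Init Trans errs k \<longrightarrow> solvable Init Trans errs k') \<and>
         (\<forall>k k'. 0 < k \<longrightarrow> k < k' \<longrightarrow>
            (\<exists>(Init :: (nat \<times> nat) set) Trans errs.
               error_spec errs \<and> solvable Init Trans errs k' \<and> \<not> solvable Init Trans errs k))"
proof (intro conjI allI impI)
  fix Init :: "('g \<times> 'l) set" and Trans errs and k k' :: nat
  assume "error_spec errs" "0 < k" "k < k'" "solvable Init Trans errs k"
  then show "solvable Init Trans errs k'" using part1 by blast
next
  fix k k' :: nat
  assume "0 < k" "k < k'"
  then show "\<exists>(Init :: (nat \<times> nat) set) Trans errs.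
               error_spec errs \<and> solvable Init Trans errs k' \<and> \<not> solvable Init Trans errs k"
    using errE_spec[of k] solvable_k'[of k k'] not_solvable_k[of k] by blast
qed


end
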